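(* In the setting described in the context, if either ($0<v_0<1$ and $\omega_0>-\frac{\nu}{2}f_0(v_0)$) or ($v_0>1$ and $\omega_0<-\frac{\nu}{2}f_0(v_0)$), then type A blowup occurs.
   Context: Fix $\nu>0$, $v_0>0$ with $v_0\neq1$, and $\omega_0\in\mathbb{R}$. Consider the real ODE system $\frac{d\omega_{-2,i}}{dt}=\omega_{-2,i}^2\frac{1-2v_c^2+5v_c^4}{4v_c^2(1-v_c^2)^2}-\nu\omega_{-2,i}$, $\frac{dv_c}{dt}=-\omega_{-2,i}\frac{1+v_c^2}{4v_c(1-v_c^2)}$ with $v_c(0)=v_0$, $\omega_{-2,i}(0)=\omega_0$; its solution (continued through $v_c=1$) is characterized as follows. Let $F(v)=\frac{v(v^2-1)}{(v^2+1)^2}+\arctan v$, which is a strictly increasing bijection from $(0,\infty)$ onto $(0,\pi/2)$, and let $G(t)=F(v_0)+\frac{2\omega_0 v_0(1-e^{-\nu t})}{\nu(v_0^2-1)(v_0^2+1)^2}$. Then $v_c(t)$ is defined by $F(v_c(t))=G(t)$ for as long as $G(t)\in(0,\pi/2)$, and $\omega_{-2,i}(t)=\omega_0e^{-\nu t}\frac{v_0}{v_c(t)}\frac{v_c(t)^2-1}{v_0^2-1}\left(\frac{v_c(t)^2+1}{v_0^2+1}\right)^2$. Type A blowup means: there is a finite $t_c>0$ with $v_c(t)>0$ on $[0,t_c)$ and $v_c(t)\to0^+$ as $t\to t_c^-$. Type B blowup means: there is a finite $t_c>0$ with $v_c(t)\in(0,\infty)$ on $[0,t_c)$ and $v_c(t)\to+\infty$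 as $t\to t_c^-$. Here $f_0(x)=(x^2-1)^2+\frac{(x^2+1)^2}{x}(x^2-1)\arctan(x)$ and $f_\infty(x)=(x^2-1)^2+\frac{(x^2+1)^2}{x}(x^2-1)\left(\arctan(x)-\frac{\pi}{2}\right)$ for $x>0$. *)

theory Defs
  imports "HOL-Analysis.Analysis"
begin

definition Fv :: "real \<Rightarrow> real" where
  "Fv v = v * (v^2 - 1) / (v^2 + 1)^2 + arctan v"

definition Gt :: "real \<Rightarrow> real \<Rightarrow> real \<Rightarrow> real \<Rightarrow> real" where
  "Gt \<nu> v0 \<omega>0 t = Fv v0 + 2 * \<omega>0 * v0 * (1 - exp (- \<nu> * t)) / (\<nu> * (v0^2 - 1) * (v0^2 + 1)^2)"

text \<open>The solution v_c(t): the unique v > 0 with F v = G t (meaningful while G t lies in (0, pi/2)).\<close>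
definition vc :: "real \<Rightarrow> real \<Rightarrow> real \<Rightarrow> real \<Rightarrow> real" where
  "vc \<nu> v0 \<omega>0 t = (THE v. v > 0 \<and> Fv v = Gt \<nu> v0 \<omega>0 t)"

definition f0 :: "real \<Rightarrow> real" where
  "f0 x = (x^2 - 1)^2 + (x^2 + 1)^2 / x * (x^2 - 1) * arctan x"

definition typeA_blowup :: "real \<Rightarrow> real \<Rightarrow> real \<Rightarrow> bool" where
  "typeA_blowup \<nu> v0 \<omega>0 \<longleftrightarrow>
     (\<exists>tc > 0. (\<forall>t \<in> {0..<tc}. 0 < Gt \<nu> v0 \<omega>0 t \<and> Gt \<nu> v0 \<omega>0 t < pi/2 \<and> vc \<nu> v0 \<omega>0 t > 0)
        \<and> filterlim (vc \<nu> v0 \<omega>0) (at_right 0) (at_left tc))"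

end

theory Submission imports Defs begin

lemma Fv_deriv: "(Fv has_real_derivative 8*x^2/(x^2+1)^3) (at x)"
proof -
  have p: "x^2+1 > 0" "1+x^2 > 0" by (simp_all add: add_nonneg_pos add_pos_nonneg)
  show ?thesis
  unfolding Fv_def[abs_def]
  apply (intro derivative_eq_intros)
  apply (rule refl | simp)+
  apply (use p in simp)
  apply (rule refl)+
  apply (simp add: inverse_eq_divide)
  apply (simp add: divide_simps p[THEN less_imp_neq, symmetric] p[THEN less_imp_neq])
  apply algebra
  done
qed

lemma Fv_cont: "continuous_on S Fv"
  using Fv_deriv DERIV_isCont continuous_at_imp_continuous_on by blast

lemma Fv_0: "Fv 0 = 0" by (simp add: Fv_def)

lemma Fv_strict: assumes "0 \<le> a" "a < b" shows "Fv a < Fv b"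
proof -
  obtain z where z: "z > a" "z < b" "Fv b - Fv a = (b - a) * (8*z^2/(z^2+1)^3)"
    using MVT2[OF assms(2), of Fv "\<lambda>x. 8*x^2/(x^2+1)^3"] Fv_deriv by blast
  have "z > 0" using z assms by linarith
  then have "8*z^2/(z^2+1)^3 > 0" by (simp add: add_pos_nonneg)
  moreover have "b - a > 0" using assms by simp
  ultimately have "(b - a) * (8*z^2/(z^2+1)^3) > 0" by (simp only: mult_pos_pos)
  then show ?thesis using z by linarith
qed

lemma Fv_pos: "0 < v \<Longrightarrow> 0 < Fv v" using Fv_strict[of 0 v] Fv_0 by simp

lemma Fv_inv: assumes "v > 0" shows "Fv v + Fv (1/v) = pi/2"
proof -
  have a: "arctan (1/v) = pi/2 - arctan v" using Transcendental.arctan_inverse[of v] assms by simp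
  have e: "(1/v) * ((1/v)^2 - 1) / ((1/v)^2 + 1)^2 = - (v * (v^2 - 1) / (v^2 + 1)^2)"
  proof -
    have p: "v^2+1 > 0" "1+v^2 > 0" by (simp_all add: add_nonneg_pos add_pos_nonneg)
    show ?thesis using assms p
      apply (simp add: divide_simps p[THEN less_imp_neq, symmetric] p[THEN less_imp_neq])
      apply algebra
      done
  qed
  have "v * (v^2 - 1) / (v^2 + 1)^2 + (1/v) * ((1/v)^2 - 1) / ((1/v)^2 + 1)^2 = 0"
    unfolding e by simp
  then show ?thesis unfolding Fv_def a by linarith
qed

lemma Fv_lt: "0 < v \<Longrightarrow> Fv v < pi/2"
  using Fv_inv[of v] Fv_pos[of "1/v"] by simp

lemma Fv_solve: assumes "0 < y" "y \<le> Fv w" "0 < w"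
  shows "(THE v. v > 0 \<and> Fv v = y) > 0 \<and> Fv (THE v. v > 0 \<and> Fv v = y) = y"
proof -
  obtain x where x: "x \<ge> 0" "x \<le> w" "Fv x = y"
    using IVT'[of Fv 0 y w] assms Fv_0 Fv_cont by force
  have "x > 0" using x assms Fv_0 by (metis less_eq_real_def)
  have u: "v = x" if "v > 0 \<and> Fv v = y" for v
  proof (rule ccontr)
    assume "v \<noteq> x"
    then consider "v < x" | "x < v" by linarith
    then show False using Fv_strict[of v x] Fv_strict[of x v] that x \<open>x>0\<close> by cases auto
  qed
  have "(THE v. v > 0 \<and> Fv v = y) = x"
  proof (rule the_equality)
    show "x > 0 \<and> Fv x = y" using x(3) \<open>x>0\<close> by blast
  next
    fix v assume "v > 0 \<and> Fv v = y" then show "v = x" by (rule u)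
  qed
  then show ?thesis using x(3) \<open>x>0\<close> by (simp only:)
qed


lemma cD: fixes \<nu> v0 \<omega>0 :: real assumes "\<nu> > 0" "v0 > 0" "v0^2 - 1 \<noteq> 0" "v0^2 + 1 > 0"
  shows "2*\<omega>0 * v0/(\<nu>*(v0^2-1)*(v0^2+1)^2) = \<omega>0 / (\<nu>*(v0^2-1)*(v0^2+1)^2/(2 * v0))"
  using assms by (simp add: divide_simps)
lemma DF: fixes \<nu> v0 :: real assumes "\<nu> > 0" "v0 > 0" "v0^2 - 1 \<noteq> 0" "v0^2 + 1 > 0"
  shows "(\<nu>*(v0^2-1)*(v0^2+1)^2/(2 * v0)) * Fv v0 = \<nu>/2 * f0 v0"
  unfolding Fv_def f0_def using assms
  by (simp add: divide_simps) algebra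
lemma q_lem: fixes c F0 :: real assumes "c < 0" "F0 > 0" "F0 + c < 0"
  shows "0 < 1 + F0/c" "1 + F0/c < 1" "c*(1+F0/c) = c + F0"
proof -
  have "F0/c < 0" using assms by (simp add: divide_pos_neg)
  moreover have "-1 < F0/c" using assms by (simp add: less_divide_eq)
  ultimately show "0 < 1 + F0/c" "1 + F0/c < 1" by simp_all
  show "c*(1+F0/c) = c + F0" using assms by (simp add: distrib_left)
qed

theorem lemma3p5:
  fixes \<nu> v0 \<omega>0 :: real
  assumes "\<nu> > 0" and "v0 > 0" and "v0 \<noteq> 1"
    and "(v0 < 1 \<and> \<omega>0 > - (\<nu> / 2) * f0 v0) \<or> (v0 > 1 \<and> \<omega>0 < - (\<nu> / 2) * f0 v0)"
  shows "typeA_blowup \<nu> v0 \<omega>0"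
proof -
  define F0 where "F0 = Fv v0"
  define c where "c = 2*\<omega>0* v0/(\<nu>*(v0^2-1)*(v0^2+1)^2)"
  define G where "G = Gt \<nu> v0 \<omega>0"
  have Geq: "G t = F0 + c*(1 - exp(-\<nu>*t))" for t
    unfolding G_def Gt_def F0_def c_def by simp
  have F0pos: "F0 > 0" "F0 < pi/2" unfolding F0_def using Fv_pos Fv_lt assms(2) by auto
  define D where "D = \<nu>*(v0^2-1)*(v0^2+1)^2/(2* v0)"
  have v1: "v0^2 - 1 \<noteq> 0" using assms(2,3) by (auto simp: power2_eq_1_iff)
  have v2: "v0^2 + 1 > 0" by (simp add: add_nonneg_pos add_pos_nonneg)
  have cD: "c = \<omega>0 / D" unfolding c_def D_def using cD[OF assms(1,2) v1 v2] .
  have DF: "D * F0 = \<nu>/2 * f0 v0" unfolding D_def F0_def using DF[OF assms(1,2) v1 v2] .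
  have key: "F0 + c < 0"
  proof (cases "v0 < 1")
    case True
    then have "v0^2 < 1" using assms(2) by (simp add: power_less_one_iff)
    then have "D < 0" unfolding D_def using assms(1,2) v2
      by (simp add: divide_neg_pos mult_neg_pos mult_pos_neg)
    moreover have "\<omega>0 + D*F0 > 0" using assms(4) True DF by auto
    ultimately have "(\<omega>0 + D*F0)/D < 0" by (simp add: divide_pos_neg)
    then show ?thesis using cD \<open>D<0\<close> by (simp add: add_divide_distrib)
  next
    case False
    then have "v0 > 1" using assms(3) by simp
    then have "v0^2 > 1" by (simp add: one_less_power)
    then have "D > 0" unfolding D_def using assms(1,2) v2 by simp
    moreover have "\<omega>0 + D*F0 < 0" using assms(4) False DF by auto
    ultimately have "(\<omega>0 + D*F0)/D < 0" by (simp add: divide_neg_pos)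
    then show ?thesis using cD \<open>D>0\<close> by (simp add: add_divide_distrib)
  qed
  have cneg: "c < 0" using key F0pos by linarith
  define q where "q = 1 + F0/c"
  have q: "0 < q" "q < 1" unfolding q_def using q_lem(1,2)[OF cneg F0pos(1) key] by auto
  have cq: "c*q = c + F0" unfolding q_def using q_lem(3)[OF cneg F0pos(1) key] .
  define tc where "tc = - ln q / \<nu>"
  have lnq: "ln q < 0" using q by simp
  have tcpos: "tc > 0" unfolding tc_def using lnq assms(1) by (simp add: divide_neg_pos)
  have etc: "exp (-\<nu>*tc) = q" unfolding tc_def using q assms(1) by simp
  have Gpos: "G t > 0" if "t < tc" for t
  proof -
    have "exp (-\<nu>*t) > q" using etc that assms(1) by (metis exp_less_cancel_iff mult_less_cancel_left_pos neg_less_iff_less mult_minus_left)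
    then have "c * exp(-\<nu>*t) < c*q" using cneg by simp
    then show ?thesis using Geq[of t] cq by (simp add: algebra_simps)
  qed
  have Gle: "G t \<le> F0" if "t \<ge> 0" for t
  proof -
    have "exp (-\<nu>*t) \<le> 1" using that assms(1) by simp
    then show ?thesis using Geq[of t] cneg by (simp add: mult_nonpos_nonneg)
  qed
  have Gtc: "G tc = 0" using Geq[of tc] etc cq by (simp add: algebra_simps)
  have Glim: "(G \<longlongrightarrow> 0) (at_left tc)"
  proof -
    have "continuous_on UNIV G" unfolding Geq[abs_def] by (intro continuous_intros)
    then have "(G \<longlongrightarrow> G tc) (at tc)" by (simp add: continuous_on_def)
    then show ?thesis using Gtc by (metis tendsto_within_subset subset_UNIV)
  qed
  have vcprop: "vc \<nu> v0 \<omega>0 t > 0 \<and> Fv (vc \<nu> v0 \<omega>0 t) = G t" if "0 \<le> t" "t < tc" for t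
    using Fv_solve[of "G t" v0] Gpos[OF that(2)] Gle[OF that(1)] assms(2)
    unfolding vc_def G_def F0_def by simp
  have part1: "\<forall>t \<in> {0..<tc}. 0 < Gt \<nu> v0 \<omega>0 t \<and> Gt \<nu> v0 \<omega>0 t < pi/2 \<and> vc \<nu> v0 \<omega>0 t > 0"
    using Gpos Gle F0pos vcprop unfolding G_def by fastforce
  have ev: "eventually (\<lambda>t. t \<in> {0<..<tc}) (at_left tc)"
    using eventually_at_left_real[OF tcpos] .
  have lim: "(vc \<nu> v0 \<omega>0 \<longlongrightarrow> 0) (at_left tc)"
  proof (rule order_tendstoI)
    fix a :: real assume "a < 0"
    show "eventually (\<lambda>t. a < vc \<nu> v0 \<omega>0 t) (at_left tc)"
      using ev
    proof eventually_elim
      case (elim t)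
      then have "vc \<nu> v0 \<omega>0 t > 0" using vcprop by auto
      then show ?case using \<open>a<0\<close> by linarith
    qed
  next
    fix a :: real assume "a > 0"
    then have "Fv a > 0" by (rule Fv_pos)
    then have "eventually (\<lambda>t. G t < Fv a) (at_left tc)" using order_tendstoD(2)[OF Glim] by blast
    with ev show "eventually (\<lambda>t. vc \<nu> v0 \<omega>0 t < a) (at_left tc)"
    proof eventually_elim
      case (elim t)
      then have "vc \<nu> v0 \<omega>0 t > 0" "Fv (vc \<nu> v0 \<omega>0 t) < Fv a" using vcprop by auto
      show ?case
      proof (rule ccontr)
        assume "\<not> vc \<nu> v0 \<omega>0 t < a"
        then consider "a = vc \<nu> v0 \<omega>0 t" | "a < vc \<nu> v0 \<omega>0 t" by linarith
        then show False
        proof cases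
          case 1 then show False using \<open>Fv (vc \<nu> v0 \<omega>0 t) < Fv a\<close> by simp
        next
          case 2 then show False using Fv_strict[of a "vc \<nu> v0 \<omega>0 t"] \<open>a>0\<close> \<open>Fv (vc \<nu> v0 \<omega>0 t) < Fv a\<close> by linarith
        qed
      qed
    qed
  qed
  have "filterlim (vc \<nu> v0 \<omega>0) (at_right 0) (at_left tc)"
  proof -
    have "eventually (\<lambda>t. vc \<nu> v0 \<omega>0 t \<in> {0<..} \<and> vc \<nu> v0 \<omega>0 t \<noteq> 0) (at_left tc)"
      using ev
    proof eventually_elim
      case (elim t)
      then have "vc \<nu> v0 \<omega>0 t > 0" using vcprop by auto
      then show ?case by simp
    qed
    then show ?thesis unfolding filterlim_at using lim by simp
  qed
  then show ?thesis unfolding typeA_blowup_def using part1 tcpos by blast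
qed

end
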